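(* Let $f:[1,\infty)\to\mathbb R$ be convex and strictly increasing with $f(1)=0$ (e.g. $f(x)=x\ln x$ or $f(x)=x-1$), and let $E_f(\sigma)=f(\|\sigma\|_\gamma)$ for density operators $\sigma$ on $\mathcal H_1\otimes\mathcal H_2$ with $\mathcal H_1,\mathcal H_2$ finite-dimensional. Then $E_f(\sigma)=0$ if and only if $\sigma$ is separable.
   Context: A density operator is a positive trace class operator with trace one; a density operator $\varrho$ on $\mathcal H_1\otimes\mathcal H_2$ is separable if $\varrho=\sum_i\omega_i\rho^{(1)}_i\otimes\rho^{(2)}_i$ with $\omega_i>0$ and density operators $\rho^{(1)}_i,\rho^{(2)}_i$ on $\mathcal H_1,\mathcal H_2$. $\|x\|_1$ is the trace norm. The greatest cross norm is $\|t\|_\gamma:=\inf\{\sum_{i=1}^n\|u_i\|_1\|v_i\|_1 : t=\sum_{i=1}^n u_i\otimes v_i\}$ over finite decompositions into elementary tensors of operators on $\mathcal H_1$ and $\mathcal H_2$. For density operators $\|\sigma\|_\gamma\ge1$. *)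

theory Defs
  imports "HOL-Analysis.Analysis"
begin

text \<open>Finite-dimensional Hilbert spaces H = C^'n, operators = complex matrices indexed by a
  finite type. H1 (x) H2 is C^('a \<times> 'b).\<close>

definition adjoint_mat :: "complex^'n^'n \<Rightarrow> complex^'n^'n" where
  "adjoint_mat A = (\<chi> i j. cnj (A $ j $ i))"

definition positive_op :: "complex^'n^'n \<Rightarrow> bool" where
  "positive_op A \<longleftrightarrow> (\<forall>v :: complex^'n.
      Im ((\<Sum>i\<in>UNIV. cnj (v $ i) * (A *v v) $ i)) = 0 \<and>
      Re ((\<Sum>i\<in>UNIV. cnj (v $ i) * (A *v v) $ i)) \<ge> 0)"

definition density_op :: "complex^'n^'n \<Rightarrow> bool" where
  "density_op A \<longleftrightarrow> positive_op A \<and> trace A = 1"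

definition abs_op :: "complex^'n^'n \<Rightarrow> complex^'n^'n" where
  "abs_op A = (THE B. positive_op B \<and> B ** B = adjoint_mat A ** A)"

definition trace_norm :: "complex^'n^'n \<Rightarrow> real" where
  "trace_norm A = Re (trace (abs_op A))"

definition tensor_op :: "complex^'a^'a \<Rightarrow> complex^'b^'b \<Rightarrow> complex^('a \<times> 'b)^('a \<times> 'b)" where
  "tensor_op u v = (\<chi> r c. u $ fst r $ fst c * v $ snd r $ snd c)"

definition separable :: "complex^('a::finite \<times> 'b::finite)^('a \<times> 'b) \<Rightarrow> bool" where
  "separable \<rho> \<longleftrightarrow> (\<exists>(n::nat) (\<omega>::nat \<Rightarrow> real) (\<rho>1::nat \<Rightarrow> complex^'a^'a) (\<rho>2::nat \<Rightarrow> complex^'b^'b).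
      (\<forall>i<n. \<omega> i > 0 \<and> density_op (\<rho>1 i) \<and> density_op (\<rho>2 i)) \<and>
      \<rho> = (\<Sum>i<n. \<omega> i *\<^sub>R tensor_op (\<rho>1 i) (\<rho>2 i)))"

definition gamma_norm :: "complex^('a::finite \<times> 'b::finite)^('a \<times> 'b) \<Rightarrow> real" where
  "gamma_norm t = Inf {(\<Sum>i<n. trace_norm (u i) * trace_norm (v i)) | (n::nat) (u::nat \<Rightarrow> complex^'a^'a) (v::nat \<Rightarrow> complex^'b^'b).
      t = (\<Sum>i<n. tensor_op (u i) (v i))}"

end

theory Submission
  imports Defs
begin


definition ip :: "complex^'n \<Rightarrow> complex^'n \<Rightarrow> complex" where
  "ip v w = (\<Sum>i\<in>UNIV. cnj (v$i) * w$i)"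

lemma ip_zero_right[simp]: "ip v 0 = 0" by (simp add: ip_def)
lemma ip_zero_left[simp]: "ip 0 v = 0" by (simp add: ip_def)
lemma ip_add_right: "ip v (w + z) = ip v w + ip v z"
  by (simp add: ip_def distrib_left sum.distrib)
lemma ip_add_left: "ip (v + w) z = ip v z + ip w z"
  by (simp add: ip_def distrib_right sum.distrib)
lemma ip_diff_right: "ip v (w - z) = ip v w - ip v z"
  by (simp add: ip_def right_diff_distrib sum_subtractf)
lemma ip_diff_left: "ip (v - w) z = ip v z - ip w z"
  by (simp add: ip_def left_diff_distrib sum_subtractf)
lemma ip_smult_right: "ip v (c *s w) = c * ip v w"
  by (simp add: ip_def sum_distrib_left algebra_simps)
lemma ip_smult_left: "ip (c *s v) w = cnj c * ip v w"
  by (simp add: ip_def sum_distrib_left algebra_simps)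
lemma ip_sum_right: "ip v (\<Sum>j\<in>J. f j) = (\<Sum>j\<in>J. ip v (f j))"
  by (induction J rule: infinite_finite_induct) (simp_all add: ip_add_right)
lemma ip_sum_left: "ip (\<Sum>j\<in>J. f j) w = (\<Sum>j\<in>J. ip (f j) w)"
  by (induction J rule: infinite_finite_induct) (simp_all add: ip_add_left)
lemma ip_cnj: "cnj (ip v w) = ip w v"
  by (simp add: ip_def mult.commute)

lemma ip_self: "ip v v = complex_of_real ((norm v)^2)"
proof -
  have "ip v v = (\<Sum>i\<in>UNIV. complex_of_real ((norm (v$i))^2))"
    unfolding ip_def by (intro sum.cong refl) (metis complex_norm_square mult.commute)
  also have "\<dots> = complex_of_real (\<Sum>i\<in>UNIV. (norm (v$i))^2)" by simp
  also have "(\<Sum>i\<in>UNIV. (norm (v$i))^2) = (norm v)^2"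
    unfolding norm_vec_def L2_set_def by (simp add: sum_nonneg)
  finally show ?thesis .
qed

lemma ip_self_re: "Re (ip v v) = (norm v)^2" by (simp add: ip_self)

lemma cauchy_schwarz: "norm (ip v w) \<le> norm v * norm w"
proof -
  have "norm (ip v w) \<le> (\<Sum>i\<in>UNIV. norm (cnj (v$i) * w$i))"
    unfolding ip_def by (rule norm_sum)
  also have "\<dots> = (\<Sum>i\<in>UNIV. \<bar>norm (v$i)\<bar> * \<bar>norm (w$i)\<bar>)" by (simp add: norm_mult)
  also have "\<dots> \<le> L2_set (\<lambda>i. norm (v$i)) UNIV * L2_set (\<lambda>i. norm (w$i)) UNIV"
    by (rule L2_set_mult_ineq)
  finally show ?thesis by (simp add: norm_vec_def)
qed

lemma norm_smult: "norm (c *s (v::complex^'n)) = norm c * norm v"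
  unfolding norm_vec_def L2_set_def
  by (simp add: norm_mult power_mult_distrib sum_distrib_left[symmetric] real_sqrt_mult)

lemma ip_adjoint: "ip v (A *v w) = ip (adjoint_mat A *v v) w"
proof -
  have "ip v (A *v w) = (\<Sum>i\<in>UNIV. \<Sum>j\<in>UNIV. cnj (v$i) * A$i$j * w$j)"
    unfolding ip_def matrix_vector_mult_def by (simp add: sum_distrib_left mult.assoc)
  also have "\<dots> = (\<Sum>j\<in>UNIV. \<Sum>i\<in>UNIV. cnj (v$i) * A$i$j * w$j)"
    by (rule sum.swap)
  also have "\<dots> = ip (adjoint_mat A *v v) w"
    unfolding ip_def matrix_vector_mult_def adjoint_mat_def
    by (simp add: sum_distrib_right cnj_sum mult.commute) (simp add: sum_distrib_left)
  finally show ?thesis .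
qed

lemma mv_smult: "(A::complex^'n^'m) *v (c *s v) = c *s (A *v v)"
  by (simp add: vec_eq_iff matrix_vector_mult_def sum_distrib_left mult.left_commute)
lemma mv_add: "(A::complex^'n^'m) *v (v + w) = A *v v + A *v w"
  by (simp add: matrix_vector_right_distrib)
lemma mv_diff: "(A::complex^'n^'m) *v (v - w) = A *v v - A *v w"
  by (simp add: vec_eq_iff matrix_vector_mult_def right_diff_distrib sum_subtractf)
lemma mv_sum: "(A::complex^'n^'m) *v (\<Sum>j\<in>J. f j) = (\<Sum>j\<in>J. A *v f j)"
  by (induction J rule: infinite_finite_induct) (simp_all add: mv_add)

definition orthonormal :: "(nat \<Rightarrow> complex^'n) \<Rightarrow> nat \<Rightarrow> bool" where
  "orthonormal e m \<longleftrightarrow> (\<forall>j<m. \<forall>k<m. ip (e j) (e k) = (if j = k then 1 else 0))"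

lemma ip_sum_orth:
  assumes "orthonormal e m" "k < m"
  shows "ip (e k) (\<Sum>j<m. c j *s e j) = c k"
proof -
  have "ip (e k) (\<Sum>j<m. c j *s e j) = (\<Sum>j<m. c j * ip (e k) (e j))"
    by (simp add: ip_sum_right ip_smult_right)
  also have "\<dots> = (\<Sum>j<m. if j = k then c j else 0)"
    using assms by (intro sum.cong refl) (auto simp: orthonormal_def)
  also have "\<dots> = c k" using assms(2) by simp
  finally show ?thesis .
qed

lemma orthonormal_card:
  fixes e :: "nat \<Rightarrow> complex^'n"
  assumes "orthonormal e m"
  shows "m \<le> CARD('n)"
proof -
  have inj: "inj_on e {..<m}"
  proof (rule inj_onI)
    fix j k assume "j \<in> {..<m}" "k \<in> {..<m}" "e j = e k"
    then have "ip (e j) (e k) = 1" using assms by (auto simp: orthonormal_def)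
    then show "j = k" using assms \<open>j \<in> _\<close> \<open>k \<in> _\<close> by (auto simp: orthonormal_def split: if_splits)
  qed
  have "vec.independent (e ` {..<m})"
    unfolding vec.independent_explicit
  proof (intro conjI allI impI ballI)
    show "finite (e ` {..<m})" by simp
    fix c v assume c: "(\<Sum>v\<in>e ` {..<m}. c v *s v) = 0" and v: "v \<in> e ` {..<m}"
    then obtain k where k: "k < m" "v = e k" by auto
    have "(\<Sum>v\<in>e ` {..<m}. c v *s v) = (\<Sum>j<m. c (e j) *s e j)"
      by (simp add: sum.reindex[OF inj])
    then have "ip (e k) (\<Sum>j<m. c (e j) *s e j) = 0" using c by simp
    then show "c v = 0" using ip_sum_orth[OF assms k(1)] k by simp
  qed
  then have "card (e ` {..<m}) \<le> vec.dim (UNIV :: (complex^'n) set)"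
    by (rule vec.independent_card_le_dim[OF subset_UNIV])
  then show ?thesis by (simp add: card_image[OF inj] card_cart_basis)
qed

lemma orthonormal_extend:
  assumes "orthonormal e m" "norm w = 1" "\<forall>j<m. ip (e j) w = 0"
  shows "orthonormal (e(m := w)) (Suc m)"
proof -
  have "ip w (e j) = 0" if "j < m" for j
    using assms(3) that ip_cnj[of "e j" w] by simp
  then show ?thesis
    using assms unfolding orthonormal_def by (auto simp: less_Suc_eq ip_self)
qed

lemma orthonormal_complete:
  fixes e :: "nat \<Rightarrow> complex^'n"
  assumes "orthonormal e CARD('n)"
  shows "v = (\<Sum>j<CARD('n). ip (e j) v *s e j)"
proof (rule ccontr)
  let ?N = "CARD('n)"
  define w where "w = v - (\<Sum>j<?N. ip (e j) v *s e j)"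
  assume "v \<noteq> (\<Sum>j<?N. ip (e j) v *s e j)"
  then have "w \<noteq> 0" by (simp add: w_def)
  then have nw: "norm w > 0" by simp
  have orth: "ip (e k) w = 0" if "k < ?N" for k
    using ip_sum_orth[OF assms that] by (simp add: w_def ip_diff_right)
  define u where "u = complex_of_real (1 / norm w) *s w"
  have "norm u = 1" using nw by (simp add: u_def norm_smult norm_divide)
  moreover have "\<forall>j<?N. ip (e j) u = 0" by (simp add: u_def ip_smult_right orth)
  ultimately have "orthonormal (e(?N := u)) (Suc ?N)"
    by (rule orthonormal_extend[OF assms])
  from orthonormal_card[OF this] show False by simp
qed

lemma exists_orth:
  fixes e :: "nat \<Rightarrow> complex^'n"
  assumes "orthonormal e k" "k < CARD('n)"
  shows "\<exists>u. norm u = 1 \<and> (\<forall>j<k. ip (e j) u = 0)"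
proof (rule ccontr)
  assume H: "\<not> ?thesis"
  have "x \<in> vec.span (e ` {..<k})" for x :: "complex^'n"
  proof -
    define w where "w = x - (\<Sum>j<k. ip (e j) x *s e j)"
    have orth: "ip (e l) w = 0" if "l < k" for l
      using ip_sum_orth[OF assms(1) that] by (simp add: w_def ip_diff_right)
    have "w = 0"
    proof (rule ccontr)
      assume "w \<noteq> 0"
      then have nw: "norm w > 0" by simp
      define u where "u = complex_of_real (1 / norm w) *s w"
      have "norm u = 1" using nw by (simp add: u_def norm_smult norm_divide)
      moreover have "\<forall>j<k. ip (e j) u = 0" by (simp add: u_def ip_smult_right orth)
      ultimately show False using H by blast
    qed
    then have "x = (\<Sum>j<k. ip (e j) x *s e j)" by (simp add: w_def)
    also have "\<dots> \<in> vec.span (e ` {..<k})"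
      by (intro vec.span_sum vec.span_scale vec.span_base) auto
    finally show ?thesis .
  qed
  then have "vec.dim (UNIV :: (complex^'n) set) \<le> card (e ` {..<k})"
    by (intro vec.dim_le_card) auto
  also have "\<dots> \<le> k" using card_image_le[of "{..<k}" e] by simp
  finally show False using assms(2) by (simp add: card_cart_basis)
qed

definition hermitian :: "complex^'n^'n \<Rightarrow> bool" where
  "hermitian A \<longleftrightarrow> adjoint_mat A = A"

lemma herm_ip: "hermitian A \<Longrightarrow> ip v (A *v w) = ip (A *v v) w"
  by (simp add: ip_adjoint hermitian_def)

lemma herm_real: assumes "hermitian A" shows "ip v (A *v v) = complex_of_real (Re (ip v (A *v v)))"
proof -
  have "cnj (ip v (A *v v)) = ip v (A *v v)"
    by (simp add: ip_cnj herm_ip[OF assms])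
  then show ?thesis by (metis Reals_cnj_iff complex_is_Real_iff of_real_Re)
qed

lemma cont_quad: "continuous_on UNIV (\<lambda>v. Re (ip v ((A::complex^'n^'n) *v v)))"
proof -
  have "(\<lambda>v. Re (ip v (A *v v))) = (\<lambda>v. Re (\<Sum>i\<in>UNIV. cnj (v$i) * (\<Sum>j\<in>UNIV. A$i$j * v$j)))"
    by (simp add: ip_def matrix_vector_mult_def fun_eq_iff)
  moreover have "continuous_on UNIV (\<lambda>v. Re (\<Sum>i\<in>UNIV. cnj (v$i) * (\<Sum>j\<in>UNIV. A$i$j * v$j)))"
    by (intro continuous_intros)
  ultimately show ?thesis by metis
qed

lemma cont_ip: "continuous_on UNIV (\<lambda>v. ip (e::complex^'n) v)"
proof -
  have "(\<lambda>v. ip e v) = (\<lambda>v. (\<Sum>i\<in>UNIV. cnj (e$i) * v$i))"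
    by (simp add: ip_def fun_eq_iff)
  moreover have "continuous_on UNIV (\<lambda>v. (\<Sum>i\<in>UNIV. cnj (e$i) * v$i))"
    by (intro continuous_intros)
  ultimately show ?thesis by metis
qed

lemma spectral_step:
  fixes A :: "complex^'n^'n" and e :: "nat \<Rightarrow> complex^'n"
  assumes herm: "hermitian A" and on: "orthonormal e k" and kN: "k < CARD('n)"
    and eig: "\<forall>j<k. A *v e j = complex_of_real (l j) *s e j"
  shows "\<exists>u \<mu>. norm u = 1 \<and> (\<forall>j<k. ip (e j) u = 0) \<and> A *v u = complex_of_real \<mu> *s u"
proof -
  define S where "S = {v::complex^'n. \<forall>j<k. ip (e j) v = 0}"
  define g where "g = (\<lambda>v. Re (ip v (A *v v)))"
  have closedS: "closed S"
    unfolding S_def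
    by (intro closed_Collect_all closed_Collect_imp closed_Collect_eq cont_ip continuous_on_const) auto
  have "compact (S \<inter> sphere 0 1)"
    by (intro closed_Int_compact closedS compact_sphere)
  moreover obtain u0 where u0: "norm u0 = 1" "\<forall>j<k. ip (e j) u0 = 0"
    using exists_orth[OF on kN] by blast
  then have "S \<inter> sphere 0 1 \<noteq> {}" by (auto simp: S_def)
  moreover have "continuous_on (S \<inter> sphere 0 1) g"
    unfolding g_def by (rule continuous_on_subset[OF cont_quad]) auto
  ultimately obtain v where v: "v \<in> S \<inter> sphere 0 1" and vmax: "\<forall>y\<in>S \<inter> sphere 0 1. g y \<le> g v"
    using continuous_attains_sup by blast
  define \<mu> where "\<mu> = g v"
  have nv: "norm v = 1" using v by simp
  have vS: "\<forall>j<k. ip (e j) v = 0" using v by (simp add: S_def)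
  have gscale: "g (complex_of_real r *s y) = r^2 * g y" for r y
    by (simp add: g_def mv_smult ip_smult_left ip_smult_right power2_eq_square)
  have gle: "g y \<le> \<mu> * (norm y)^2" if "y \<in> S" for y
  proof (cases "y = 0")
    case True then show ?thesis by (simp add: g_def)
  next
    case False
    then have ny: "norm y > 0" by simp
    define y' where "y' = complex_of_real (1 / norm y) *s y"
    have "y' \<in> S" using that by (simp add: S_def y'_def ip_smult_right)
    moreover have "norm y' = 1" using ny by (simp add: y'_def norm_smult norm_divide)
    ultimately have "g y' \<le> \<mu>" using vmax by (simp add: \<mu>_def)
    moreover have "g y' = (1 / norm y)^2 * g y" unfolding y'_def by (rule gscale)
    ultimately show ?thesis using ny by (simp add: field_simps)
  qed
  have ipvAv: "ip v (A *v v) = complex_of_real \<mu>"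
    using herm_real[OF herm, of v] by (simp add: \<mu>_def g_def)
  define w where "w = A *v v - complex_of_real \<mu> *s v"
  have ipvv: "ip v v = 1" using nv by (simp add: ip_self)
  have wS: "w \<in> S"
  proof -
    have "ip (e j) w = 0" if "j < k" for j
    proof -
      have "ip (e j) (A *v v) = ip (A *v e j) v" by (rule herm_ip[OF herm])
      also have "\<dots> = 0" using eig vS that by (simp add: ip_smult_left)
      finally show ?thesis using vS that by (simp add: w_def ip_diff_right ip_smult_right)
    qed
    then show ?thesis by (simp add: S_def)
  qed
  have ipvw: "ip v w = 0" by (simp add: w_def ip_diff_right ip_smult_right ipvAv ipvv)
  have ipwv: "ip w v = 0" using ipvw ip_cnj[of v w] by simp
  define W where "W = (norm w)^2"
  have ipww: "ip w w = complex_of_real W" by (simp add: W_def ip_self)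
  have ipwAv: "ip w (A *v v) = complex_of_real W"
  proof -
    have "A *v v = w + complex_of_real \<mu> *s v" by (simp add: w_def)
    then show ?thesis by (simp add: ip_add_right ip_smult_right ipww ipwv)
  qed
  have ipvAw: "ip v (A *v w) = complex_of_real W"
    using ipwAv herm_ip[OF herm, of v w] ip_cnj[of w "A *v v"] by (metis complex_cnj_complex_of_real)
  have key: "2 * t * W \<le> t^2 * (\<mu> * W - g w)" for t :: real
  proof -
    define T where "T = complex_of_real t"
    define y where "y = v + T *s w"
    have "y \<in> S" using vS wS by (simp add: S_def y_def ip_add_right ip_smult_right)
    then have ineq: "g y \<le> \<mu> * (norm y)^2" by (rule gle)
    have "ip y (A *v y) = ip v (A *v v) + T * ip v (A *v w) + cnj T * ip w (A *v v) + cnj T * T * ip w (A *v w)"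
      by (simp add: y_def mv_add mv_smult ip_add_left ip_add_right ip_smult_left ip_smult_right algebra_simps)
    then have gy: "g y = \<mu> + 2 * t * W + t^2 * g w"
      by (simp add: g_def T_def ipvAw ipwAv ipvAv power2_eq_square)
    have "ip y y = ip v v + T * ip v w + cnj T * ip w v + cnj T * T * ip w w"
      by (simp add: y_def ip_add_left ip_add_right ip_smult_left ip_smult_right algebra_simps)
    then have "ip y y = complex_of_real (1 + t^2 * W)"
      by (simp add: ipvv ipvw ipwv ipww T_def power2_eq_square)
    then have "(norm y)^2 = 1 + t^2 * W"
      using ip_self[of y] by (metis of_real_eq_iff)
    then show ?thesis using ineq gy by (simp add: algebra_simps)
  qed
  have "W = 0"
  proof (rule ccontr)
    assume "W \<noteq> 0"
    then have Wp: "W > 0" by (simp add: W_def)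
    define C where "C = \<mu> * W - g w"
    define t where "t = W / (\<bar>C\<bar> + 1)"
    have tp: "t > 0" using Wp by (simp add: t_def)
    have "t * C < 2 * W"
    proof -
      have "t * C \<le> t * \<bar>C\<bar>" using tp by (intro mult_left_mono) auto
      also have "\<dots> = W * (\<bar>C\<bar> / (\<bar>C\<bar> + 1))" by (simp add: t_def)
      also have "\<dots> \<le> W * 1" using Wp by (intro mult_left_mono) auto
      finally show ?thesis using Wp by simp
    qed
    moreover have "2 * t * W \<le> t^2 * C" using key[of t] by (simp add: C_def)
    ultimately show False using tp by (simp add: power2_eq_square algebra_simps)
  qed
  then have "w = 0" by (simp add: W_def)
  then have "A *v v = complex_of_real \<mu> *s v" by (simp add: w_def)
  then show ?thesis using nv vS by blast
qed

lemma spectral_k: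
  fixes A :: "complex^'n^'n"
  assumes herm: "hermitian A" and "k \<le> CARD('n)"
  shows "\<exists>e l. orthonormal (e::nat \<Rightarrow> complex^'n) k \<and> (\<forall>j<k. A *v e j = complex_of_real (l j) *s e j)"
  using assms(2)
proof (induction k)
  case 0 then show ?case by (auto simp: orthonormal_def)
next
  case (Suc k)
  then obtain e l where el: "orthonormal e k" "\<forall>j<k. A *v e j = complex_of_real (l j) *s e j" by auto
  obtain u \<mu> where u: "norm u = 1" "\<forall>j<k. ip (e j) u = 0" "A *v u = complex_of_real \<mu> *s u"
    using spectral_step[OF herm el(1) _ el(2)] Suc.prems by auto
  have "orthonormal (e(k := u)) (Suc k)" by (rule orthonormal_extend[OF el(1) u(1,2)])
  moreover have "\<forall>j<Suc k. A *v (e(k := u)) j = complex_of_real ((l(k := \<mu>)) j) *s (e(k := u)) j"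
    using el(2) u(3) by (auto simp: less_Suc_eq)
  ultimately show ?case by blast
qed

lemma spectral:
  fixes A :: "complex^'n^'n"
  assumes herm: "hermitian A"
  shows "\<exists>e l. orthonormal (e::nat \<Rightarrow> complex^'n) CARD('n) \<and> (\<forall>j<CARD('n). A *v e j = complex_of_real (l j) *s e j)"
  using spectral_k[OF herm order_refl] .



lemma pos_ip: "positive_op A \<longleftrightarrow> (\<forall>v. Im (ip v (A *v v)) = 0 \<and> Re (ip v (A *v v)) \<ge> 0)"
  by (simp add: positive_op_def ip_def)

lemma ip_axis_left: "ip (axis i 1) z = z $ i"
proof -
  have "ip (axis i 1) z = (\<Sum>k\<in>UNIV. if k = i then z $ k else 0)"
    unfolding ip_def by (intro sum.cong refl) (auto simp: axis_def)
  then show ?thesis by simp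
qed

lemma mv_axis: "((A::complex^'n^'m) *v axis j 1) $ i = A $ i $ j"
proof -
  have "(A *v axis j 1) $ i = (\<Sum>k\<in>UNIV. if k = j then A $ i $ k else 0)"
    unfolding matrix_vector_mult_def by (simp add: axis_def if_distrib cong: if_cong)
  then show ?thesis by simp
qed

lemma ip_axis_mat: "ip (axis i 1) (A *v axis j 1) = A $ i $ j"
  by (simp add: ip_axis_left mv_axis)

lemma pos_herm:
  assumes "positive_op A" shows "hermitian A"
proof -
  have q: "Im (ip v (A *v v)) = 0" for v using assms by (simp add: pos_ip)
  have pol: "ip x (A *v y) = cnj (ip y (A *v x))" for x y
  proof -
    define a where "a = ip x (A *v y)"
    define b where "b = ip y (A *v x)"
    have "ip (x + y) (A *v (x + y)) = ip x (A *v x) + ip y (A *v y) + a + b"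
      by (simp add: a_def b_def mv_add ip_add_left ip_add_right)
    then have 1: "Im (a + b) = 0" using q[of "x+y"] q[of x] q[of y] by simp
    have "ip (x + \<i> *s y) (A *v (x + \<i> *s y)) = ip x (A *v x) + ip y (A *v y) + \<i> * a - \<i> * b"
      by (simp add: a_def b_def mv_add mv_smult ip_add_left ip_add_right ip_smult_left ip_smult_right algebra_simps)
    then have 2: "Re (a - b) = 0" using q[of "x + \<i> *s y"] q[of x] q[of y] by simp
    show ?thesis using 1 2 unfolding a_def[symmetric] b_def[symmetric]
      by (simp add: complex_eq_iff)
  qed
  have "cnj (A $ j $ i) = A $ i $ j" for i j
    using pol[of "axis i 1" "axis j 1"] by (simp add: ip_axis_mat)
  then show ?thesis
    unfolding hermitian_def adjoint_mat_def by (simp add: vec_eq_iff)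
qed

definition diagm :: "(nat \<Rightarrow> complex^'n) \<Rightarrow> (nat \<Rightarrow> complex) \<Rightarrow> nat \<Rightarrow> complex^'n^'n" where
  "diagm e d N = (\<chi> a b. \<Sum>j<N. d j * (e j)$a * cnj ((e j)$b))"

lemma diagm_mv: "diagm e d N *v v = (\<Sum>j<N. (d j * ip (e j) v) *s e j)"
  unfolding diagm_def matrix_vector_mult_def ip_def
  by (simp add: vec_eq_iff sum_component sum_distrib_left sum_distrib_right sum.swap[of _ UNIV "{..<N}"] mult.commute mult.left_commute)

lemma diagm_eig:
  assumes "orthonormal e N" "k < N"
  shows "diagm e d N *v e k = d k *s e k"
proof -
  have "diagm e d N *v e k = (\<Sum>j<N. (if j = k then d k *s e k else 0))"
    unfolding diagm_mv using assms by (intro sum.cong refl) (auto simp: orthonormal_def)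
  then show ?thesis using assms(2) by simp
qed

lemma ip_diagm: "ip v (diagm e d N *v v) = (\<Sum>j<N. d j * complex_of_real ((norm (ip (e j) v))^2))"
proof -
  have "ip v (diagm e d N *v v) = (\<Sum>j<N. d j * (ip (e j) v * ip v (e j)))"
    by (simp add: diagm_mv ip_sum_right ip_smult_right mult.assoc)
  also have "\<dots> = (\<Sum>j<N. d j * complex_of_real ((norm (ip (e j) v))^2))"
    by (intro sum.cong refl) (metis complex_norm_square ip_cnj)
  finally show ?thesis .
qed

lemma diagm_pos:
  assumes "\<forall>j<N. d j \<ge> 0"
  shows "positive_op (diagm e (\<lambda>j. complex_of_real (d j)) N)"
  unfolding pos_ip ip_diagm using assms
  by (auto simp flip: of_real_mult of_real_sum intro!: sum_nonneg)

lemma trace_diagm: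
  assumes "orthonormal e N"
  shows "trace (diagm e d N) = (\<Sum>j<N. d j)"
proof -
  have "trace (diagm e d N) = (\<Sum>j<N. d j * ip (e j) (e j))"
    unfolding trace_def diagm_def ip_def
    by (simp add: sum.swap[of _ UNIV "{..<N}"] sum_distrib_left mult.commute mult.left_commute)
  also have "\<dots> = (\<Sum>j<N. d j)" using assms by (intro sum.cong refl) (auto simp: orthonormal_def)
  finally show ?thesis .
qed

lemma eq_on_basis:
  fixes A B :: "complex^'n^'n"
  assumes "orthonormal e CARD('n)" "\<forall>k<CARD('n). A *v e k = B *v e k"
  shows "A = B"
  unfolding matrix_eq
proof
  fix x :: "complex^'n"
  have "A *v x = A *v (\<Sum>j<CARD('n). ip (e j) x *s e j)" using orthonormal_complete[OF assms(1)] by metis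
  also have "\<dots> = (\<Sum>j<CARD('n). ip (e j) x *s (A *v e j))" by (simp add: mv_sum mv_smult)
  also have "\<dots> = (\<Sum>j<CARD('n). ip (e j) x *s (B *v e j))" using assms(2) by simp
  also have "\<dots> = B *v (\<Sum>j<CARD('n). ip (e j) x *s e j)" by (simp add: mv_sum mv_smult)
  also have "\<dots> = B *v x" using orthonormal_complete[OF assms(1)] by metis
  finally show "A *v x = B *v x" .
qed

lemma adjoint_adjoint[simp]: "adjoint_mat (adjoint_mat A) = A"
  by (simp add: adjoint_mat_def vec_eq_iff)

lemma ip_adjoint2: "ip v (adjoint_mat A *v w) = ip (A *v v) w"
  using ip_adjoint[of v "adjoint_mat A" w] by simp

lemma trace_basis:
  fixes M :: "complex^'n^'n"
  assumes "orthonormal e CARD('n)"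
  shows "trace M = (\<Sum>j<CARD('n). ip (e j) (M *v e j))"
proof -
  let ?N = "CARD('n)"
  have ax: "axis i 1 = (\<Sum>j<?N. cnj ((e j) $ i) *s e j)" for i
  proof -
    have "axis i 1 = (\<Sum>j<?N. ip (e j) (axis i 1) *s e j)" by (rule orthonormal_complete[OF assms])
    moreover have "ip (e j) (axis i 1) = cnj ((e j) $ i)" for j
      using ip_cnj[of "axis i 1" "e j"] by (simp add: ip_axis_left)
    ultimately show ?thesis by simp
  qed
  have "trace M = (\<Sum>i\<in>UNIV. ip (axis i 1) (M *v axis i 1))"
    by (simp add: trace_def ip_axis_mat)
  also have "\<dots> = (\<Sum>i\<in>UNIV. \<Sum>j<?N. cnj ((e j) $ i) * (M *v e j) $ i)"
  proof (intro sum.cong refl)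
    fix i
    have "M *v axis i 1 = M *v (\<Sum>j<?N. cnj ((e j) $ i) *s e j)" using ax[of i] by metis
    also have "\<dots> = (\<Sum>j<?N. cnj ((e j) $ i) *s (M *v e j))" by (simp add: mv_sum mv_smult)
    finally show "ip (axis i 1) (M *v axis i 1) = (\<Sum>j<?N. cnj ((e j) $ i) * (M *v e j) $ i)"
      by (simp add: ip_axis_left)
  qed
  also have "\<dots> = (\<Sum>j<?N. ip (e j) (M *v e j))"
    by (subst sum.swap) (simp add: ip_def)
  finally show ?thesis .
qed



lemma gram_pos: "positive_op (adjoint_mat A ** A)"
proof -
  have "ip v ((adjoint_mat A ** A) *v v) = complex_of_real ((norm (A *v v))^2)" for v
    by (simp add: matrix_vector_mul_assoc[symmetric] ip_adjoint2 ip_self)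
  then show ?thesis by (simp add: pos_ip)
qed

lemma abs_structure:
  fixes A :: "complex^'n^'n"
  shows "\<exists>e. orthonormal e CARD('n) \<and>
     abs_op A = diagm e (\<lambda>j. complex_of_real (norm (A *v e j))) CARD('n) \<and>
     (\<forall>D. positive_op D \<and> D ** D = adjoint_mat A ** A \<longrightarrow> D = abs_op A)"
proof -
  let ?N = "CARD('n)"
  let ?H = "adjoint_mat A ** A"
  have hH: "hermitian ?H" by (rule pos_herm[OF gram_pos])
  obtain e l where on: "orthonormal e ?N" and eig: "\<forall>j<?N. ?H *v e j = complex_of_real (l j) *s e j"
    using spectral[OF hH] by blast
  define s where "s = (\<lambda>j. norm (A *v e j))"
  have ls: "l j = (s j)^2" if "j < ?N" for j
  proof -
    have "ip (e j) (?H *v e j) = complex_of_real (l j)"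
      using eig that on by (simp add: ip_smult_right orthonormal_def)
    moreover have "ip (e j) (?H *v e j) = complex_of_real ((s j)^2)"
      by (simp add: s_def matrix_vector_mul_assoc[symmetric] ip_adjoint2 ip_self)
    ultimately show ?thesis by (metis of_real_eq_iff of_real_power)
  qed
  define B where "B = diagm e (\<lambda>j. complex_of_real (s j)) ?N"
  have Bpos: "positive_op B" unfolding B_def by (rule diagm_pos) (simp add: s_def)
  have Beig: "B *v e k = complex_of_real (s k) *s e k" if "k < ?N" for k
    unfolding B_def by (rule diagm_eig[OF on that])
  have BB: "B ** B = ?H"
  proof (rule eq_on_basis[OF on], intro allI impI)
    fix k assume k: "k < ?N"
    have "(B ** B) *v e k = complex_of_real ((s k)^2) *s e k"
      by (simp add: matrix_vector_mul_assoc[symmetric] Beig[OF k] mv_smult vector_smult_assoc power2_eq_square)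
    also have "\<dots> = ?H *v e k" using eig k ls by simp
    finally show "(B ** B) *v e k = ?H *v e k" .
  qed
  have uniq: "D = B" if D: "positive_op D" "D ** D = ?H" for D
  proof (rule eq_on_basis[OF on], intro allI impI)
    fix k assume k: "k < ?N"
    define x where "x = e k"
    define \<mu> where "\<mu> = complex_of_real (s k)"
    have hD: "hermitian D" by (rule pos_herm[OF D(1)])
    have DDx: "D *v (D *v x) = (\<mu> * \<mu>) *s x"
      using eig k ls D(2) by (simp add: x_def \<mu>_def matrix_vector_mul_assoc power2_eq_square)
    have "D *v x = \<mu> *s x"
    proof (cases "s k = 0")
      case True
      have "complex_of_real ((norm (D *v x))^2) = ip (D *v x) (D *v x)" by (simp add: ip_self)
      also have "\<dots> = ip x (D *v (D *v x))" by (simp add: herm_ip[OF hD])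
      also have "\<dots> = 0" using DDx True by (simp add: \<mu>_def)
      finally have "D *v x = 0" by simp
      then show ?thesis using True by (simp add: \<mu>_def)
    next
      case False
      then have sp: "s k > 0" by (simp add: s_def)
      define y where "y = D *v x - \<mu> *s x"
      have Dy: "D *v y = (- \<mu>) *s y"
        by (simp add: y_def mv_diff mv_smult DDx vector_smult_assoc algebra_simps vec_eq_iff)
      have "ip y (D *v y) = (- \<mu>) * ip y y"
        by (simp only: Dy ip_smult_right)
      then have "ip y (D *v y) = - \<mu> * complex_of_real ((norm y)^2)"
        by (simp add: ip_self)
      then have "Re (ip y (D *v y)) = - s k * (norm y)^2" by (simp add: \<mu>_def)
      moreover have "Re (ip y (D *v y)) \<ge> 0" using D(1) by (simp add: pos_ip)
      ultimately have "s k * (norm y)^2 \<le> 0" by simp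
      then have "(norm y)^2 \<le> 0" using sp by (simp add: mult_le_0_iff)
      then have "y = 0" by simp
      then show ?thesis by (simp add: y_def)
    qed
    then show "D *v e k = B *v e k" using Beig[OF k] by (simp add: x_def \<mu>_def)
  qed
  have aB: "abs_op A = B"
    unfolding abs_op_def
    apply (rule the_equality)
    using Bpos BB apply blast
    using uniq apply blast
    done
  have "\<forall>D. positive_op D \<and> D ** D = ?H \<longrightarrow> D = abs_op A" using uniq aB by blast
  then show ?thesis using on aB unfolding B_def s_def by blast
qed

lemma abs_op_unique:
  assumes "positive_op D" "D ** D = adjoint_mat A ** A"
  shows "abs_op A = D"
proof -
  show ?thesis using abs_structure[of A] assms by metis
qed

lemma trace_norm_formula:
  fixes A :: "complex^'n^'n"
  shows "\<exists>e. orthonormal e CARD('n) \<and> trace_norm A = (\<Sum>j<CARD('n). norm (A *v e j))"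
proof -
  obtain e where on: "orthonormal e CARD('n)" and
    ab: "abs_op A = diagm e (\<lambda>j. complex_of_real (norm (A *v e j))) CARD('n)"
    using abs_structure[of A] by blast
  have "trace_norm A = Re (\<Sum>j<CARD('n). complex_of_real (norm (A *v e j)))"
    unfolding trace_norm_def ab trace_diagm[OF on] ..
  also have "\<dots> = (\<Sum>j<CARD('n). norm (A *v e j))" by (simp flip: of_real_sum)
  finally show ?thesis using on by blast
qed

definition contr :: "complex^'n^'n \<Rightarrow> bool" where
  "contr X \<longleftrightarrow> (\<forall>v. norm (X *v v) \<le> norm v)"

lemma T1:
  fixes A X :: "complex^'n^'n"
  assumes "contr X"
  shows "Re (trace (X ** A)) \<le> trace_norm A"
proof -
  obtain e where on: "orthonormal e CARD('n)" and tn: "trace_norm A = (\<Sum>j<CARD('n). norm (A *v e j))"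
    using trace_norm_formula[of A] by blast
  have ne: "norm (e j) = 1" if "j < CARD('n)" for j
  proof -
    have "ip (e j) (e j) = 1" using on that by (simp add: orthonormal_def)
    then show ?thesis using ip_self[of "e j"] by (metis norm_ge_zero of_real_1 of_real_eq_iff power2_eq_1_iff abs_of_nonneg abs_norm_cancel one_power2 power2_eq_iff_nonneg zero_le_one)
  qed
  have "Re (trace (X ** A)) = (\<Sum>j<CARD('n). Re (ip (e j) (X *v (A *v e j))))"
    by (simp add: trace_basis[OF on] matrix_vector_mul_assoc)
  also have "\<dots> \<le> (\<Sum>j<CARD('n). norm (A *v e j))"
  proof (rule sum_mono)
    fix j assume "j \<in> {..<CARD('n)}"
    then have "Re (ip (e j) (X *v (A *v e j))) \<le> norm (e j) * norm (X *v (A *v e j))"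
      using complex_Re_le_cmod cauchy_schwarz order_trans by blast
    also have "\<dots> \<le> norm (A *v e j)" using ne \<open>j \<in> _\<close> assms by (simp add: contr_def)
    finally show "Re (ip (e j) (X *v (A *v e j))) \<le> norm (A *v e j)" .
  qed
  finally show ?thesis using tn by simp
qed



definition cscale :: "complex \<Rightarrow> complex^'n^'m \<Rightarrow> complex^'n^'m" where
  "cscale c M = (\<chi> i j. c * M$i$j)"

definition outer :: "complex^'n \<Rightarrow> complex^'n \<Rightarrow> complex^'n^'n" where
  "outer x y = (\<chi> i j. x$i * cnj (y$j))"

lemma cscale_mv: "cscale c M *v v = c *s (M *v v)"
  by (simp add: cscale_def matrix_vector_mult_def vec_eq_iff sum_distrib_left mult.assoc)

lemma cscale_mm_left: "cscale c M ** A = cscale c (M ** A)"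
  by (simp add: cscale_def matrix_matrix_mult_def vec_eq_iff sum_distrib_left mult.assoc)

lemma cscale_mm_right: "M ** cscale c A = cscale c (M ** A)"
  by (simp add: cscale_def matrix_matrix_mult_def vec_eq_iff sum_distrib_left mult.left_commute)

lemma trace_cscale: "trace (cscale c M) = c * trace M"
  by (simp add: cscale_def trace_def sum_distrib_left)

lemma scaleR_cscale: "r *\<^sub>R (M::complex^'n^'m) = cscale (complex_of_real r) M"
  unfolding cscale_def by (simp add: vec_eq_iff) (simp add: scaleR_conv_of_real)

lemma contr_cscale: "contr X \<Longrightarrow> norm c \<le> 1 \<Longrightarrow> contr (cscale c X)"
  unfolding contr_def cscale_mv norm_smult
  by (metis mult_le_one norm_ge_zero order_trans mult_left_le_one_le)

lemma contr_mat1: "contr (mat 1)"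
  by (simp add: contr_def)

lemma outer_mv: "outer x y *v v = ip y v *s x"
  by (simp add: outer_def matrix_vector_mult_def vec_eq_iff ip_def sum_distrib_left mult.commute mult.left_commute)

lemma trace_outer_mm: "trace (outer x y ** A) = ip y (A *v x)"
proof -
  have "trace (outer x y ** A) = (\<Sum>i\<in>UNIV. \<Sum>k\<in>UNIV. x$i * cnj (y$k) * A$k$i)"
    by (simp add: trace_def outer_def matrix_matrix_mult_def)
  also have "\<dots> = (\<Sum>k\<in>UNIV. \<Sum>i\<in>UNIV. x$i * cnj (y$k) * A$k$i)" by (rule sum.swap)
  also have "\<dots> = ip y (A *v x)"
    by (simp add: ip_def matrix_vector_mult_def sum_distrib_left mult.commute mult.left_commute)
  finally show ?thesis .
qed

lemma mm_diff: "((M::complex^'n^'n) - N) ** A = M ** A - N ** A"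
  by (simp add: matrix_matrix_mult_def vec_eq_iff left_diff_distrib sum_subtractf)

lemma norm_axis_c: "norm (axis k (1::complex) :: complex^'n) = 1"
proof -
  have "ip (axis k 1) (axis k (1::complex) :: complex^'n) = 1" by (simp only: ip_axis_left) (simp add: axis_def)
  then have "(norm (axis k (1::complex) :: complex^'n))^2 = 1"
    using ip_self[of "axis k (1::complex) :: complex^'n"] by (metis of_real_eq_1_iff)
  then show ?thesis by (smt (verit) norm_ge_zero power2_eq_1_iff)
qed

lemma contr_outer: "norm x \<le> 1 \<Longrightarrow> norm y \<le> 1 \<Longrightarrow> contr (outer x y)"
  unfolding contr_def outer_mv norm_smult
proof
  fix v assume "norm x \<le> 1" "norm y \<le> 1"
  have "norm (ip y v) * norm x \<le> norm (ip y v)"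
    using \<open>norm x \<le> 1\<close> by (simp add: mult_left_le)
  also have "\<dots> \<le> norm y * norm v" by (rule cauchy_schwarz)
  also have "\<dots> \<le> norm v" using \<open>norm y \<le> 1\<close> by (simp add: mult_left_le_one_le)
  finally show "norm (ip y v) * norm x \<le> norm v" .
qed

definition phase :: "complex \<Rightarrow> complex" where
  "phase a = (if a = 0 then 0 else cnj a / complex_of_real (norm a))"

lemma phase_norm: "norm (phase a) \<le> 1"
  by (simp add: phase_def norm_divide)

lemma phase_mult: "phase a * a = complex_of_real (norm a)"
proof (cases "a = 0")
  case False
  then show ?thesis
    by (simp add: phase_def field_simps complex_norm_square[symmetric] power2_eq_square)
qed (simp add: phase_def)

lemma entry_bound:
  fixes A :: "complex^'n^'n"
  assumes "\<forall>X. contr X \<longrightarrow> Re (trace (X ** A)) \<le> M"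
  shows "norm (A$i$k) \<le> M"
proof -
  let ?X = "cscale (phase (A$i$k)) (outer (axis k 1) (axis i 1))"
  have "contr ?X"
    by (intro contr_cscale contr_outer phase_norm) (simp_all add: norm_axis_c)
  then have "Re (trace (?X ** A)) \<le> M" using assms by blast
  moreover have "trace (?X ** A) = phase (A$i$k) * A$i$k"
    by (simp add: cscale_mm_left trace_cscale trace_outer_mm ip_axis_left mv_axis)
  ultimately show ?thesis by (simp add: phase_mult)
qed

lemma trace_mat1_mm: "trace (cscale c (mat 1) ** A) = c * trace A"
  by (simp add: cscale_mm_left trace_cscale)

lemma abs_trace_le:
  fixes A :: "complex^'n^'n"
  assumes "\<forall>X. contr X \<longrightarrow> Re (trace (X ** A)) \<le> M"
  shows "norm (trace A) \<le> M"
proof -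
  let ?X = "cscale (phase (trace A)) (mat 1) :: complex^'n^'n"
  have "contr ?X" by (intro contr_cscale contr_mat1 phase_norm)
  then have "Re (trace (?X ** A)) \<le> M" using assms by blast
  then show ?thesis by (simp add: trace_mat1_mm phase_mult)
qed

lemma trace_norm_bound: "\<forall>X. contr X \<longrightarrow> Re (trace (X ** A)) \<le> trace_norm A"
  using T1 by blast

lemma abs_trace_trace_norm: "norm (trace A) \<le> trace_norm A"
  by (rule abs_trace_le[OF trace_norm_bound])

lemma trace_norm_zero: "trace_norm A = 0 \<Longrightarrow> A = 0"
  using entry_bound[OF trace_norm_bound, of A] by (simp add: vec_eq_iff)

lemma density_trace_norm:
  assumes "density_op \<rho>"
  shows "trace_norm \<rho> = 1"
proof -
  have pos: "positive_op \<rho>" and tr: "trace \<rho> = 1" using assms by (auto simp: density_op_def)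
  have "adjoint_mat \<rho> = \<rho>" using pos_herm[OF pos] by (simp add: hermitian_def)
  then have "abs_op \<rho> = \<rho>" using abs_op_unique[of \<rho> \<rho>] pos by simp
  then show ?thesis using tr by (simp add: trace_norm_def)
qed

definition Bl :: "(complex^'n^'n) set" where
  "Bl = {A. \<forall>X. contr X \<longrightarrow> Re (trace (X ** A)) \<le> 1}"

lemma Bl_scale:
  assumes "trace_norm u > 0"
  shows "(1 / trace_norm u) *\<^sub>R u \<in> Bl"
proof -
  have "Re (trace (X ** ((1 / trace_norm u) *\<^sub>R u))) \<le> 1" if "contr X" for X
  proof -
    have "Re (trace (X ** ((1 / trace_norm u) *\<^sub>R u))) = Re (trace (X ** u)) / trace_norm u"
      by (simp add: scaleR_cscale cscale_mm_right trace_cscale)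
    also have "\<dots> \<le> trace_norm u / trace_norm u"
      using T1[OF that, of u] assms by (intro divide_right_mono) auto
    finally show ?thesis using assms by simp
  qed
  then show ?thesis by (simp add: Bl_def)
qed

lemma Bl_cscale:
  assumes "A \<in> Bl" "norm c \<le> 1"
  shows "cscale c A \<in> Bl"
proof -
  have "Re (trace (X ** cscale c A)) \<le> 1" if "contr X" for X
  proof -
    have "trace (X ** cscale c A) = trace (cscale c X ** A)"
      by (simp add: cscale_mm_left cscale_mm_right)
    moreover have "contr (cscale c X)" by (rule contr_cscale[OF that assms(2)])
    ultimately show ?thesis using assms(1) by (simp add: Bl_def)
  qed
  then show ?thesis by (simp add: Bl_def)
qed

lemma Bl_trace: "A \<in> Bl \<Longrightarrow> norm (trace A) \<le> 1"
  by (rule abs_trace_le) (simp add: Bl_def)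

lemma Bl_zero: "0 \<in> Bl"
  by (simp add: Bl_def matrix_matrix_mult_def trace_def)

lemma closed_Bl: "closed (Bl :: (complex^'n^'n) set)"
proof -
  have eq: "Bl = (\<Inter>X\<in>{X::complex^'n^'n. contr X}. {A. Re (trace (X ** A)) \<le> 1})"
    by (auto simp: Bl_def)
  have cl: "closed {A::complex^'n^'n. Re (trace (X ** A)) \<le> 1}" for X :: "complex^'n^'n"
  proof -
    have "continuous_on UNIV (\<lambda>A::complex^'n^'n. Re (\<Sum>i\<in>UNIV. \<Sum>k\<in>UNIV. X$i$k * A$k$i))"
      by (intro continuous_intros)
    then have "continuous_on UNIV (\<lambda>A::complex^'n^'n. Re (trace (X ** A)))"
      by (simp add: trace_def matrix_matrix_mult_def)
    then show ?thesis by (intro closed_Collect_le continuous_on_const) auto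
  qed
  show ?thesis unfolding eq by (intro closed_INT ballI cl)
qed

lemma bounded_Bl: "bounded (Bl :: (complex^'n^'n) set)"
  unfolding bounded_iff
proof (intro exI ballI)
  fix A :: "complex^'n^'n" assume A: "A \<in> Bl"
  have ent: "norm (A$i$k) \<le> 1" for i k using A by (intro entry_bound) (simp add: Bl_def)
  have "norm A \<le> (\<Sum>i\<in>UNIV. norm (A$i))"
    unfolding norm_vec_def by (rule L2_set_le_sum) simp
  also have "\<dots> \<le> (\<Sum>i\<in>UNIV. \<Sum>k\<in>UNIV. norm (A$i$k))"
    by (intro sum_mono) (simp add: norm_vec_def L2_set_le_sum)
  also have "\<dots> \<le> (\<Sum>i\<in>(UNIV::'n set). \<Sum>k\<in>(UNIV::'n set). 1)"
    by (intro sum_mono ent)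
  finally show "norm A \<le> real (CARD('n) * CARD('n))" by simp
qed

lemma compact_Bl: "compact (Bl :: (complex^'n^'n) set)"
  using closed_Bl bounded_Bl by (simp add: compact_eq_bounded_closed)



lemma complex_identity_contr:
  fixes V k p q d c :: complex
  shows "V - (1 - c) * p * q - (1 - d) * q * p + (1 - d) * q * ((1 - c) * p) = V + (d * c - 1) * (q * p)"
  by algebra

lemma contr_reflect:
  fixes x :: "complex^'n"
  assumes nx: "norm x = 1" and nc: "norm c \<le> 1"
  shows "contr (mat 1 - cscale (1 - c) (outer x x))"
  unfolding contr_def
proof
  fix v :: "complex^'n"
  define p where "p = ip x v"
  have xx: "ip x x = 1" using nx by (simp add: ip_self)
  have Xv: "(mat 1 - cscale (1 - c) (outer x x)) *v v = v - ((1 - c) * p) *s x"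
    by (simp add: matrix_vector_mult_diff_rdistrib cscale_mv outer_mv p_def vector_smult_assoc)
  have vx: "ip v x = cnj p" using ip_cnj[of x v] by (simp add: p_def)
  define w where "w = ((1 - c) * p) *s x"
  have e1: "ip (v - w) (v - w) = ip v v - ip w v - (ip v w - ip w w)"
    by (simp only: ip_diff_left ip_diff_right)
  have e2: "ip v w = (1 - c) * p * cnj p" by (simp add: w_def ip_smult_right vx)
  have e3: "ip w v = (1 - cnj c) * cnj p * p" by (simp add: w_def ip_smult_left p_def)
  have e4: "ip w w = (1 - cnj c) * cnj p * ((1 - c) * p)" by (simp add: w_def ip_smult_left ip_smult_right xx)
  have "ip (v - ((1 - c) * p) *s x) (v - ((1 - c) * p) *s x) =
        ip v v - (1 - c) * p * cnj p - (1 - cnj c) * cnj p * p + (1 - cnj c) * cnj p * ((1 - c) * p)"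
    unfolding w_def[symmetric] e1 e2 e3 e4 by algebra
  also have "\<dots> = ip v v + (cnj c * c - 1) * (cnj p * p)"
    by (rule complex_identity_contr)
  also have "\<dots> = complex_of_real ((norm v)^2 + ((norm c)^2 - 1) * (norm p)^2)"
  proof -
    have np: "cnj p * p = complex_of_real ((norm p)^2)" by (metis complex_norm_square mult.commute)
    have ncc: "cnj c * c = complex_of_real ((norm c)^2)" by (metis complex_norm_square mult.commute)
    show ?thesis by (simp only: np ncc ip_self) simp
  qed
  finally have "(norm (v - ((1 - c) * p) *s x))^2 = (norm v)^2 + ((norm c)^2 - 1) * (norm p)^2"
    using ip_self[of "v - ((1 - c) * p) *s x"] by (metis of_real_eq_iff)
  moreover have "((norm c)^2 - 1) * (norm p)^2 \<le> 0"
    using nc by (intro mult_nonpos_nonneg) (auto simp: power_le_one)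
  ultimately have "(norm (v - ((1 - c) * p) *s x))^2 \<le> (norm v)^2" by linarith
  then show "norm ((mat 1 - cscale (1 - c) (outer x x)) *v v) \<le> norm v"
    unfolding Xv by (rule power2_le_imp_le) simp
qed

lemma trace_reflect:
  "trace ((mat 1 - cscale k (outer x x)) ** A) = trace A - k * ip x (A *v x)"
  by (simp add: mm_diff trace_sub cscale_mm_left trace_cscale trace_outer_mm)

lemma Bl_pos:
  fixes A :: "complex^'n^'n"
  assumes AB: "A \<in> Bl" and tr: "trace A = 1"
  shows "positive_op A"
proof -
  have unit: "Im (ip x (A *v x)) = 0 \<and> Re (ip x (A *v x)) \<ge> 0" if nx: "norm x = 1" for x
  proof -
    define p where "p = Re (ip x (A *v x))"
    define q where "q = Im (ip x (A *v x))"
    have key: "t^2 * p - t * q \<ge> 0" if t1: "t^2 \<le> 1" for t :: real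
    proof -
      define c where "c = Complex (1 - t^2) (- t)"
      have "(1 - t^2)^2 + t^2 \<le> 1" using mult_right_mono[OF t1, of "t^2"] by (simp add: power2_eq_square algebra_simps)
      then have nc: "norm c \<le> 1" by (simp add: c_def complex_norm)
      have "contr (mat 1 - cscale (1 - c) (outer x x))" by (rule contr_reflect[OF nx nc])
      then have "Re (trace ((mat 1 - cscale (1 - c) (outer x x)) ** A)) \<le> 1"
        using AB by (simp add: Bl_def)
      then have "Re ((1 - c) * ip x (A *v x)) \<ge> 0" by (simp add: trace_reflect tr)
      moreover have "Re ((1 - c) * ip x (A *v x)) = t^2 * p - t * q"
        by (simp add: c_def p_def q_def)
      ultimately show ?thesis by simp
    qed
    have p0: "p \<ge> 0" using key[of 1] key[of "-1"] by simp
    have q0: "q = 0"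
    proof (rule ccontr)
      assume qn: "q \<noteq> 0"
      define d where "d = 1 / (p + \<bar>q\<bar> + 1)"
      have dp: "d > 0" using p0 by (simp add: d_def add_pos_nonneg)
      have dq: "d * \<bar>q\<bar> < 1" using p0 by (simp add: d_def field_simps)
      have dpl: "d * p < 1" using p0 qn by (simp add: d_def field_simps)
      have "(d * q)^2 \<le> 1"
        using dq dp by (metis abs_mult abs_of_pos abs_square_le_1 less_eq_real_def)
      then have "(d * q)^2 * p - (d * q) * q \<ge> 0" by (rule key)
      moreover have "(d * q)^2 * p - (d * q) * q = d * q^2 * (d * p - 1)"
        by (simp add: power2_eq_square algebra_simps)
      moreover have "d * q^2 * (d * p - 1) < 0"
        using dp qn dpl by (intro mult_pos_neg) auto
      ultimately show False by simp
    qed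
    show ?thesis using p0 q0 by (simp add: p_def q_def)
  qed
  show ?thesis unfolding pos_ip
  proof
    fix v :: "complex^'n"
    show "Im (ip v (A *v v)) = 0 \<and> Re (ip v (A *v v)) \<ge> 0"
    proof (cases "v = 0")
      case True then show ?thesis by simp
    next
      case False
      then have nv: "norm v > 0" by simp
      define x where "x = complex_of_real (1 / norm v) *s v"
      have nx: "norm x = 1" using nv by (simp add: x_def norm_smult norm_divide)
      have vx: "v = complex_of_real (norm v) *s x" using nv by (simp add: x_def vector_smult_assoc)
      have "ip v (A *v v) = complex_of_real ((norm v)^2) * ip x (A *v x)"
        by (subst (1 2) vx) (simp add: mv_smult ip_smult_left ip_smult_right power2_eq_square)
      then show ?thesis using unit[OF nx] by simp
    qed
  qed
qed

lemma pos_trace_norm: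
  assumes "positive_op P"
  shows "trace_norm P = Re (trace P)"
proof -
  have "adjoint_mat P = P" using pos_herm[OF assms] by (simp add: hermitian_def)
  then have "abs_op P = P" using abs_op_unique[of P P] assms by simp
  then show ?thesis by (simp add: trace_norm_def)
qed

lemma pos_scaleR: "positive_op P \<Longrightarrow> r \<ge> 0 \<Longrightarrow> positive_op (r *\<^sub>R P)"
  unfolding pos_ip scaleR_cscale cscale_mv ip_smult_right by simp

lemma trace_norm_nonneg: "trace_norm A \<ge> 0"
  using abs_trace_trace_norm[of A] norm_ge_zero order_trans by blast



lemma trace_tensor: "trace (tensor_op u v) = trace u * trace v"
proof -
  have "trace (tensor_op u v) = (\<Sum>r\<in>UNIV. u $ fst r $ fst r * v $ snd r $ snd r)"
    by (simp add: trace_def tensor_op_def)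
  also have "\<dots> = (\<Sum>a\<in>UNIV. \<Sum>b\<in>UNIV. u $ a $ a * v $ b $ b)"
    unfolding sum.cartesian_product UNIV_Times_UNIV by (simp add: case_prod_beta)
  also have "\<dots> = trace u * trace v" by (simp add: trace_def sum_product)
  finally show ?thesis .
qed

lemma tensor_scaleR_left: "tensor_op (r *\<^sub>R u) v = r *\<^sub>R tensor_op u v"
  by (simp add: tensor_op_def scaleR_cscale cscale_def vec_eq_iff mult.assoc)

lemma tensor_scaleR_right: "tensor_op u (r *\<^sub>R v) = r *\<^sub>R tensor_op u v"
  by (simp add: tensor_op_def scaleR_cscale cscale_def vec_eq_iff mult.left_commute)

lemma tensor_cscale: "tensor_op (cscale a u) (cscale b v) = cscale (a * b) (tensor_op u v)"
  by (simp add: tensor_op_def cscale_def vec_eq_iff mult_ac)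

lemma tensor_zero_left[simp]: "tensor_op 0 v = 0"
  by (simp add: tensor_op_def vec_eq_iff)

lemma tensor_zero_right[simp]: "tensor_op u 0 = 0"
  by (simp add: tensor_op_def vec_eq_iff)

lemma trace_sum: "trace (\<Sum>i\<in>I. M i :: complex^'n^'n) = (\<Sum>i\<in>I. trace (M i))"
proof (induction I rule: infinite_finite_induct)
  case (insert x F) then show ?case by (simp add: trace_add)
qed (simp_all add: trace_def)

lemma trace_scaleR: "trace (r *\<^sub>R (M::complex^'n^'n)) = complex_of_real r * trace M"
  by (simp add: scaleR_cscale trace_cscale)

lemma cscale_one[simp]: "cscale 1 M = M"
  by (simp add: cscale_def vec_eq_iff)

lemma cont_tensor: "continuous_on UNIV (\<lambda>p::(complex^'a^'a) \<times> (complex^'b^'b). tensor_op (fst p) (snd p))"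
  unfolding tensor_op_def by (intro continuous_intros)

abbreviation TT :: "(complex^('a::finite \<times> 'b::finite)^('a \<times> 'b)) set" where
  "TT \<equiv> (\<lambda>p. tensor_op (fst p) (snd p)) ` (Bl \<times> Bl)"

lemma compact_hull_TT: "compact (convex hull TT)"
proof -
  have "compact (TT :: (complex^('a::finite \<times> 'b::finite)^('a \<times> 'b)) set)"
    by (intro compact_continuous_image continuous_on_subset[OF cont_tensor] compact_Times compact_Bl) auto
  then show ?thesis by (rule compact_convex_hull)
qed

lemma zero_TT: "0 \<in> TT"
  by (rule image_eqI[where x="(0,0)"]) (auto simp: Bl_zero)

lemma hull_mem:
  fixes \<sigma> :: "complex^('a::finite \<times> 'b::finite)^('a \<times> 'b)"
    and n :: nat
  assumes \<sigma>: "\<sigma> = (\<Sum>i<n. tensor_op (u i) (v i))" and s: "s > 0"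
    and le: "(\<Sum>i<n. trace_norm (u i) * trace_norm (v i)) \<le> s"
  shows "(1/s) *\<^sub>R \<sigma> \<in> convex hull TT"
proof -
  define a where "a i = trace_norm (u i) * trace_norm (v i)" for i
  define t where "t i = (if trace_norm (u i) > 0 \<and> trace_norm (v i) > 0 then
     tensor_op ((1 / trace_norm (u i)) *\<^sub>R u i) ((1 / trace_norm (v i)) *\<^sub>R v i) else 0)" for i
  have a0: "a i \<ge> 0" for i by (simp add: a_def trace_norm_nonneg)
  have tT: "t i \<in> TT" for i
  proof (cases "trace_norm (u i) > 0 \<and> trace_norm (v i) > 0")
    case True
    then have "t i = tensor_op ((1 / trace_norm (u i)) *\<^sub>R u i) ((1 / trace_norm (v i)) *\<^sub>R v i)"
      by (simp add: t_def)
    then show ?thesis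
      by (intro image_eqI[where x="((1 / trace_norm (u i)) *\<^sub>R u i, (1 / trace_norm (v i)) *\<^sub>R v i)"])
         (use True in \<open>auto intro: Bl_scale\<close>)
  next
    case False
    then have "t i = 0" unfolding t_def by (rule if_not_P)
    then show ?thesis using zero_TT by simp
  qed
  have tm: "tensor_op (u i) (v i) = a i *\<^sub>R t i" for i
  proof (cases "trace_norm (u i) > 0 \<and> trace_norm (v i) > 0")
    case True
    then show ?thesis by (simp add: t_def a_def tensor_scaleR_left tensor_scaleR_right)
  next
    case False
    then have "trace_norm (u i) = 0 \<or> trace_norm (v i) = 0"
      using trace_norm_nonneg[of "u i"] trace_norm_nonneg[of "v i"] by linarith
    then have "u i = 0 \<or> v i = 0" using trace_norm_zero[of "u i"] trace_norm_zero[of "v i"] by blast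
    then show ?thesis using False by (auto simp: t_def)
  qed
  have \<sigma>': "(1/s) *\<^sub>R \<sigma> = (\<Sum>i<n. (a i / s) *\<^sub>R t i)"
    by (simp add: \<sigma> tm scaleR_sum_right)
  define w where "w i = (if i < n then a i / s else 1 - (\<Sum>j<n. a j / s))" for i
  define y where "y i = (if i < n then t i else 0)" for i
  have sw: "(\<Sum>i<n. a i / s) \<le> 1"
    using le s by (simp add: a_def sum_divide_distrib[symmetric])
  have "(\<Sum>i\<in>{..<Suc n}. w i *\<^sub>R y i) \<in> convex hull TT"
  proof (rule convex_sum)
    show "finite {..<Suc n}" by simp
    show "convex (convex hull TT)" by (rule convex_convex_hull)
    show "(\<Sum>i\<in>{..<Suc n}. w i) = 1" by (simp add: w_def)
    show "w i \<ge> 0" if "i \<in> {..<Suc n}" for i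
      using a0 s sw by (auto simp: w_def)
    show "y i \<in> convex hull TT" if "i \<in> {..<Suc n}" for i
      using tT zero_TT hull_subset[of TT convex] by (auto simp: y_def)
  qed
  moreover have "(\<Sum>i\<in>{..<Suc n}. w i *\<^sub>R y i) = (\<Sum>i<n. (a i / s) *\<^sub>R t i)"
    by (simp add: w_def y_def)
  ultimately show ?thesis using \<sigma>' by simp
qed



lemma sep_of_hull:
  fixes \<sigma> :: "complex^('a::finite \<times> 'b::finite)^('a \<times> 'b)"
  assumes hull: "\<sigma> \<in> convex hull TT" and tr: "trace \<sigma> = 1"
  shows "separable \<sigma>"
proof -
  obtain S c where S: "finite S" "S \<subseteq> TT" "\<forall>x\<in>S. 0 \<le> c x" "sum c S = 1"
    and sc: "(\<Sum>x\<in>S. c x *\<^sub>R x) = \<sigma>"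
    using hull unfolding convex_hull_explicit by blast
  define S' where "S' = {x\<in>S. c x > 0}"
  have fS': "finite S'" using S(1) by (simp add: S'_def)
  have S'S: "S' \<subseteq> S" by (auto simp: S'_def)
  have zero_out: "\<forall>x\<in>S - S'. c x = 0" using S(3) by (auto simp: S'_def)
  have sc': "(\<Sum>x\<in>S'. c x *\<^sub>R x) = \<sigma>"
    using sc sum.mono_neutral_left[OF S(1) S'S, of "\<lambda>x. c x *\<^sub>R x"] zero_out by simp
  have c1: "sum c S' = 1"
    using S(4) sum.mono_neutral_left[OF S(1) S'S, of c] zero_out by simp
  define P where "P x = (SOME p :: (complex^'a^'a) \<times> (complex^'b^'b). p \<in> Bl \<times> Bl \<and> x = tensor_op (fst p) (snd p))"
    for x :: "complex^('a \<times> 'b)^('a \<times> 'b)"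
  have P: "P x \<in> Bl \<times> Bl \<and> x = tensor_op (fst (P x)) (snd (P x))" if "x \<in> TT" for x :: "complex^('a \<times> 'b)^('a \<times> 'b)"
  proof -
    have "\<exists>p :: (complex^'a^'a) \<times> (complex^'b^'b). p \<in> Bl \<times> Bl \<and> x = tensor_op (fst p) (snd p)" using that by blast
    then show ?thesis unfolding P_def by (rule someI_ex)
  qed
  define U where "U x = fst (P x)" for x
  define V where "V x = snd (P x)" for x
  have UV: "U x \<in> Bl" "V x \<in> Bl" "x = tensor_op (U x) (V x)" if "x \<in> S'" for x
  proof -
    have "x \<in> TT" using that S(2) S'S by blast
    note Px = P[OF this]
    show "U x \<in> Bl" "V x \<in> Bl" "x = tensor_op (U x) (V x)"
      using Px unfolding U_def V_def mem_Times_iff by blast+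
  qed
  define z where "z x = trace (U x) * trace (V x)" for x
  have nz: "norm (z x) \<le> 1" if "x \<in> S'" for x
    unfolding z_def norm_mult using Bl_trace[OF UV(1)[OF that]] Bl_trace[OF UV(2)[OF that]]
    by (simp add: mult_le_one)
  have "1 = trace \<sigma>" using tr by simp
  also have "\<dots> = (\<Sum>x\<in>S'. complex_of_real (c x) * z x)"
    unfolding sc'[symmetric] trace_sum trace_scaleR
    by (intro sum.cong refl) (simp add: z_def trace_tensor[symmetric] UV(3)[symmetric])
  finally have "1 = Re (\<Sum>x\<in>S'. complex_of_real (c x) * z x)" by simp
  then have "(\<Sum>x\<in>S'. c x * Re (z x)) = (\<Sum>x\<in>S'. c x)" using c1 by simp
  then have sum0: "(\<Sum>x\<in>S'. c x * (1 - Re (z x))) = 0"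
    by (simp add: right_diff_distrib sum_subtractf)
  have nn: "\<forall>x\<in>S'. c x * (1 - Re (z x)) \<ge> 0"
  proof
    fix x assume x: "x \<in> S'"
    then have "c x \<ge> 0" using S(3) S'S by blast
    moreover have "Re (z x) \<le> 1" using nz[OF x] complex_Re_le_cmod order_trans by blast
    ultimately show "c x * (1 - Re (z x)) \<ge> 0" by simp
  qed
  have "\<forall>x\<in>S'. c x * (1 - Re (z x)) = 0"
    using sum_nonneg_eq_0_iff[OF fS', of "\<lambda>x. c x * (1 - Re (z x))"] sum0 nn by simp
  then have Rez: "Re (z x) = 1" if "x \<in> S'" for x using that by (auto simp: S'_def)
  have z1: "z x = 1" if "x \<in> S'" for x
  proof -
    have "(Re (z x))^2 + (Im (z x))^2 \<le> 1"
      using nz[OF that] by (metis cmod_power2 norm_ge_zero power_le_one)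
    then have "Im (z x) = 0" using Rez[OF that] by simp
    then show ?thesis using Rez[OF that] by (simp add: complex_eq_iff)
  qed
  have nU: "norm (trace (U x)) = 1" and nV: "norm (trace (V x)) = 1" if "x \<in> S'" for x
  proof -
    have a: "norm (trace (U x)) \<le> 1" "norm (trace (V x)) \<le> 1"
      using Bl_trace UV that by blast+
    have "norm (trace (U x)) * norm (trace (V x)) = 1" using z1[OF that] by (metis norm_mult norm_one z_def)
    then show "norm (trace (U x)) = 1" "norm (trace (V x)) = 1"
      using a by (smt (verit) mult_le_one norm_ge_zero mult_right_le_one_le mult_left_le_one_le)+
  qed
  define R1 where "R1 x = cscale (cnj (trace (U x))) (U x)" for x
  define R2 where "R2 x = cscale (cnj (trace (V x))) (V x)" for x
  have dens1: "density_op (R1 x)" if "x \<in> S'" for x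
  proof -
    have "R1 x \<in> Bl" unfolding R1_def by (intro Bl_cscale UV(1)[OF that]) (simp add: nU[OF that])
    moreover have "trace (R1 x) = 1"
      unfolding R1_def trace_cscale using nU[OF that]
      by (metis complex_norm_square mult.commute of_real_1 power_one)
    ultimately show ?thesis by (simp add: density_op_def Bl_pos)
  qed
  have dens2: "density_op (R2 x)" if "x \<in> S'" for x
  proof -
    have "R2 x \<in> Bl" unfolding R2_def by (intro Bl_cscale UV(2)[OF that]) (simp add: nV[OF that])
    moreover have "trace (R2 x) = 1"
      unfolding R2_def trace_cscale using nV[OF that]
      by (metis complex_norm_square mult.commute of_real_1 power_one)
    ultimately show ?thesis by (simp add: density_op_def Bl_pos)
  qed
  have tens: "tensor_op (R1 x) (R2 x) = x" if "x \<in> S'" for x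
  proof -
    have "cnj (trace (U x)) * cnj (trace (V x)) = 1" using z1[OF that] by (metis complex_cnj_mult complex_cnj_one z_def)
    then show ?thesis using UV(3)[OF that] by (simp add: R1_def R2_def tensor_cscale)
  qed
  obtain h where h: "bij_betw h {0..<card S'} S'" using ex_bij_betw_nat_finite[OF fS'] by blast
  have hS: "h i \<in> S'" if "i < card S'" for i using h that by (auto simp: bij_betw_def)
  have "\<sigma> = (\<Sum>x\<in>S'. c x *\<^sub>R tensor_op (R1 x) (R2 x))"
    using sc' tens by simp
  also have "\<dots> = (\<Sum>i\<in>{0..<card S'}. c (h i) *\<^sub>R tensor_op (R1 (h i)) (R2 (h i)))"
    by (rule sum.reindex_bij_betw[OF h, symmetric])
  finally have "\<sigma> = (\<Sum>i<card S'. c (h i) *\<^sub>R tensor_op (R1 (h i)) (R2 (h i)))"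
    by (simp add: lessThan_atLeast0)
  moreover have "\<forall>i<card S'. c (h i) > 0 \<and> density_op (R1 (h i)) \<and> density_op (R2 (h i))"
    using hS dens1 dens2 by (auto simp: S'_def)
  ultimately show ?thesis unfolding separable_def
    by (intro exI[where x="card S'"] exI[where x="\<lambda>i. c (h i)"] exI[where x="\<lambda>i. R1 (h i)"]
        exI[where x="\<lambda>i. R2 (h i)"]) simp
qed



definition Gset :: "complex^('a::finite \<times> 'b::finite)^('a \<times> 'b) \<Rightarrow> real set" where
  "Gset t = {(\<Sum>i<n. trace_norm (u i) * trace_norm (v i)) | (n::nat) (u::nat \<Rightarrow> complex^'a^'a) (v::nat \<Rightarrow> complex^'b^'b).
      t = (\<Sum>i<n. tensor_op (u i) (v i))}"

lemma gamma_Gset: "gamma_norm t = Inf (Gset t)"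
  by (simp add: gamma_norm_def Gset_def)

lemma G_lower:
  assumes tr: "trace t = 1" and g: "g \<in> Gset t"
  shows "1 \<le> g"
proof -
  obtain n u v where gd: "g = (\<Sum>i<(n::nat). trace_norm (u i) * trace_norm (v i))"
    and td: "t = (\<Sum>i<n. tensor_op (u i) (v i))"
    using g unfolding Gset_def by blast
  have "1 = norm (trace t)" using tr by simp
  also have "\<dots> = norm (\<Sum>i<n. trace (u i) * trace (v i))"
    by (simp add: td trace_sum trace_tensor)
  also have "\<dots> \<le> (\<Sum>i<n. norm (trace (u i)) * norm (trace (v i)))"
    by (rule order_trans[OF norm_sum]) (simp add: norm_mult)
  also have "\<dots> \<le> g" unfolding gd
    by (intro sum_mono mult_mono abs_trace_trace_norm trace_norm_nonneg norm_ge_zero)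
  finally show ?thesis .
qed

lemma G_nonempty: "Gset (t :: complex^('a::finite \<times> 'b::finite)^('a \<times> 'b)) \<noteq> {}"
proof -
  define U where "U p = (\<chi> i j. if i = fst (fst p) \<and> j = fst (snd p) then t $ fst p $ snd p else 0)"
    for p :: "('a \<times> 'b) \<times> ('a \<times> 'b)"
  define V where "V p = (\<chi> i j. if i = snd (fst p) \<and> j = snd (snd p) then 1 else (0::complex))"
    for p :: "('a \<times> 'b) \<times> ('a \<times> 'b)"
  have decomp: "t = (\<Sum>p\<in>UNIV. tensor_op (U p) (V p))"
  proof -
    have "t $ R $ C = (\<Sum>p\<in>UNIV. tensor_op (U p) (V p)) $ R $ C" for R C
    proof -
      have "(\<Sum>p\<in>UNIV. tensor_op (U p) (V p)) $ R $ C = (\<Sum>p\<in>UNIV. if p = (R, C) then t $ R $ C else 0)"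
        unfolding sum_component
        by (intro sum.cong refl) (auto simp: tensor_op_def U_def V_def prod_eq_iff)
      then show ?thesis by simp
    qed
    then show ?thesis by (simp add: vec_eq_iff)
  qed
  obtain h :: "nat \<Rightarrow> ('a \<times> 'b) \<times> ('a \<times> 'b)" where h: "bij_betw h {0..<card (UNIV :: (('a \<times> 'b) \<times> ('a \<times> 'b)) set)} UNIV"
    using ex_bij_betw_nat_finite[of "UNIV :: (('a \<times> 'b) \<times> ('a \<times> 'b)) set"] by auto
  define K where "K = card (UNIV :: (('a \<times> 'b) \<times> ('a \<times> 'b)) set)"
  have "t = (\<Sum>i\<in>{0..<K}. tensor_op (U (h i)) (V (h i)))"
    unfolding decomp K_def by (rule sum.reindex_bij_betw[OF h, symmetric])
  then have tK: "t = (\<Sum>i<K. tensor_op (U (h i)) (V (h i)))" by (simp add: lessThan_atLeast0)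
  have "(\<Sum>i<K. trace_norm (U (h i)) * trace_norm (V (h i))) \<in> Gset t"
    unfolding Gset_def mem_Collect_eq
    by (intro exI[of _ K] exI[of _ "\<lambda>i. U (h i)"] exI[of _ "\<lambda>i. V (h i)"] conjI refl tK)
  then show ?thesis by blast
qed

lemma sep_G:
  fixes \<sigma> :: "complex^('a::finite \<times> 'b::finite)^('a \<times> 'b)"
  assumes sep: "separable \<sigma>" and tr: "trace \<sigma> = 1"
  shows "1 \<in> Gset \<sigma>"
proof -
  obtain n \<omega> \<rho>1 \<rho>2 where H: "\<forall>i<(n::nat). \<omega> i > 0 \<and> density_op (\<rho>1 i) \<and> density_op (\<rho>2 i)"
    and sd: "\<sigma> = (\<Sum>i<n. \<omega> i *\<^sub>R tensor_op (\<rho>1 i) (\<rho>2 i))"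
    using sep unfolding separable_def by blast
  define u where "u i = \<omega> i *\<^sub>R \<rho>1 i" for i
  have sd': "\<sigma> = (\<Sum>i<n. tensor_op (u i) (\<rho>2 i))" by (simp add: sd u_def tensor_scaleR_left)
  have tnu: "trace_norm (u i) = \<omega> i" if "i < n" for i
  proof -
    have "positive_op (\<rho>1 i)" "trace (\<rho>1 i) = 1" using H that by (auto simp: density_op_def)
    moreover have "\<omega> i \<ge> 0" using H that by auto
    ultimately show ?thesis unfolding u_def
      by (simp add: pos_trace_norm pos_scaleR trace_scaleR)
  qed
  have tnv: "trace_norm (\<rho>2 i) = 1" if "i < n" for i using H that density_trace_norm by blast
  have "(\<Sum>i<n. trace_norm (u i) * trace_norm (\<rho>2 i)) = (\<Sum>i<n. \<omega> i)"
    using tnu tnv by simp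
  moreover have "(\<Sum>i<n. \<omega> i) = 1"
  proof -
    have "complex_of_real (\<Sum>i<n. \<omega> i) = (\<Sum>i<n. complex_of_real (\<omega> i) * (trace (\<rho>1 i) * trace (\<rho>2 i)))"
      using H by (simp add: density_op_def)
    also have "\<dots> = trace \<sigma>" by (simp add: sd trace_sum trace_scaleR trace_tensor)
    finally show ?thesis using tr by (metis of_real_eq_1_iff)
  qed
  ultimately show ?thesis unfolding Gset_def using sd' by force
qed

lemma gamma_one_hull:
  fixes \<sigma> :: "complex^('a::finite \<times> 'b::finite)^('a \<times> 'b)"
  assumes tr: "trace \<sigma> = 1" and g1: "gamma_norm \<sigma> = 1"
  shows "\<sigma> \<in> convex hull TT"
proof -
  have ne: "Gset \<sigma> \<noteq> {}" by (rule G_nonempty)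
  have bdd: "bdd_below (Gset \<sigma>)" unfolding bdd_below_def using G_lower[OF tr] by blast
  define s where "s m = 1 + inverse (real (Suc m))" for m
  have mem: "(1 / s m) *\<^sub>R \<sigma> \<in> convex hull TT" for m
  proof -
    have "Inf (Gset \<sigma>) < s m" using g1 by (simp add: gamma_Gset s_def)
    then obtain g where "g \<in> Gset \<sigma>" "g < s m" using cInf_less_iff[OF ne bdd] by blast
    then obtain n u v where "g = (\<Sum>i<(n::nat). trace_norm (u i) * trace_norm (v i))"
      and td: "\<sigma> = (\<Sum>i<n. tensor_op (u i) (v i))"
      unfolding Gset_def by blast
    moreover have "s m > 0" by (simp add: s_def add_pos_nonneg)
    ultimately show ?thesis using \<open>g < s m\<close>
      by (intro hull_mem[OF td]) auto
  qed
  have "(\<lambda>m. (1 / s m) *\<^sub>R \<sigma>) \<longlonglongrightarrow> (1 / 1) *\<^sub>R \<sigma>"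
    unfolding s_def
    by (intro tendsto_scaleR tendsto_divide tendsto_const LIMSEQ_inverse_real_of_nat_add) auto
  then have lim: "(\<lambda>m. (1 / s m) *\<^sub>R \<sigma>) \<longlonglongrightarrow> \<sigma>" by simp
  have cl: "closed (convex hull (TT :: (complex^('a \<times> 'b)^('a \<times> 'b)) set))"
    using compact_hull_TT by (rule compact_imp_closed)
  show ?thesis by (rule closed_sequentially[OF cl mem lim])
qed

theorem corollary9:
  fixes f :: "real \<Rightarrow> real"
    and \<sigma> :: "complex^('a::finite \<times> 'b::finite)^('a \<times> 'b)"
  assumes "convex_on {1..} f"
    and "strict_mono_on {1..} f"
    and "f 1 = 0"
    and "density_op \<sigma>"
  shows "f (gamma_norm \<sigma>) = 0 \<longleftrightarrow> separable \<sigma>"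
proof -
  have tr: "trace \<sigma> = 1" using assms(4) by (simp add: density_op_def)
  have ne: "Gset \<sigma> \<noteq> {}" by (rule G_nonempty)
  have ge1: "gamma_norm \<sigma> \<ge> 1"
    unfolding gamma_Gset by (rule cInf_greatest[OF ne]) (rule G_lower[OF tr])
  have bdd: "bdd_below (Gset \<sigma>)" unfolding bdd_below_def using G_lower[OF tr] by blast
  have iff1: "f (gamma_norm \<sigma>) = 0 \<longleftrightarrow> gamma_norm \<sigma> = 1"
  proof
    assume f0: "f (gamma_norm \<sigma>) = 0"
    show "gamma_norm \<sigma> = 1"
    proof (rule ccontr)
      assume "gamma_norm \<sigma> \<noteq> 1"
      then have "1 < gamma_norm \<sigma>" using ge1 by simp
      then have "f 1 < f (gamma_norm \<sigma>)"
        using assms(2) ge1 by (intro strict_mono_onD[OF assms(2)]) auto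
      then show False using f0 assms(3) by simp
    qed
  next
    assume "gamma_norm \<sigma> = 1"
    then show "f (gamma_norm \<sigma>) = 0" using assms(3) by simp
  qed
  have iff2: "gamma_norm \<sigma> = 1 \<longleftrightarrow> separable \<sigma>"
  proof
    assume "gamma_norm \<sigma> = 1"
    then have "\<sigma> \<in> convex hull TT" by (rule gamma_one_hull[OF tr])
    then show "separable \<sigma>" by (rule sep_of_hull[OF _ tr])
  next
    assume "separable \<sigma>"
    then have "1 \<in> Gset \<sigma>" by (rule sep_G[OF _ tr])
    then have "gamma_norm \<sigma> \<le> 1" unfolding gamma_Gset by (rule cInf_lower[OF _ bdd])
    then show "gamma_norm \<sigma> = 1" using ge1 by simp
  qed
  show ?thesis using iff1 iff2 by simp
qed

end
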